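(* Fix $\theta>0$ and real parameters $\mu_b,\mu_c,\sigma_b^2,\sigma_c^2,\sigma_{bc}$ with $\sigma_{bc}>\mu_c$. For the snowdrift game described in the context, let $F_d$ denote the quantity $F$ for group size $d$. Then there exists $d_0\ge2$ such that $F_d>0$ for all $d\ge d_0$. That is, for interactions in large enough groups, weak selection favors the abundance of $C$ whenever $\sigma_{bc}>\mu_c$, for every $\theta>0$.
   Context: For integers $0\le k\le n$ and $\theta>0$ let $\psi_n^k=\frac{\prod_{i=1}^{k}(\theta+i-1)\prod_{j=1}^{n-k}(\theta+j-1)}{\prod_{l=1}^{n}(2\theta+l-1)}$ (empty products equal $1$). For group size $d\ge2$ and real arrays $\mu_{C,k},\mu_{D,k},\sigma_{CC,kl},\sigma_{CD,kl},\sigma_{DD,kl}$ ($k,l=0,\ldots,d-1$) define $$F=\sum_{k=0}^{d-1}\binom{d-1}{k}\psi_{d+1}^{k+1}(\mu_{C,k}-\mu_{D,k})+\sum_{k,l=0}^{d-1}\binom{d-1}{k}\binom{d-1}{l}\Big[-\psi_{2d+1}^{k+l+2}(\sigma_{CC,kl}-\sigma_{CD,kl})+\psi_{2d+1}^{k+l+1}(\sigma_{DD,kl}-\sigma_{CD,kl})\Big].$$ These arrays are the scaled means and second moments of the payoffs $a_k$ (cooperator) and $b_k$ (defector) with $k$ cooperating partners. In the paper's large-population weak-selection approximation, the average abundance of $C$ is $\tfrac12+\tfrac{\delta(1-u)}{u}F$, so weak selection favors the abundance of $C$ iff $F>0$. Snowdrift game: random benefit $b$ and cost $c$ have scaled moments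 $\mu_b,\mu_c,\sigma_b^2,\sigma_c^2,\sigma_{bc}$ (i.e. $E[b]=\mu_b\delta+o(\delta)$, $E[c]=\mu_c\delta+o(\delta)$, $E[b^2]=\sigma_b^2\delta+o(\delta)$, $E[c^2]=\sigma_c^2\delta+o(\delta)$, $E[bc]=\sigma_{bc}\delta+o(\delta)$). Payoffs are $a_k=b-\frac{c}{k+1}$, $b_0=0$, $b_k=b$ for $k\ge1$. Hence $\mu_{C,k}=\mu_b-\frac{\mu_c}{k+1}$, $\mu_{D,k}=\mu_b\mathbf 1_{\{k\ne0\}}$, $\sigma_{CC,kl}=\sigma_b^2-\big(\frac1{k+1}+\frac1{l+1}\big)\sigma_{bc}+\frac{\sigma_c^2}{(k+1)(l+1)}$, $\sigma_{DD,kl}=\sigma_b^2\mathbf 1_{\{k\ne0,\,l\ne0\}}$, $\sigma_{CD,kl}=\big(\sigma_b^2-\frac{\sigma_{bc}}{k+1}\big)\mathbf 1_{\{l\ne0\}}$. *)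

theory Defs
  imports Complex_Main
begin

definition psi :: "real \<Rightarrow> nat \<Rightarrow> nat \<Rightarrow> real" where
  "psi \<theta> n k = (\<Prod>i=1..k. \<theta> + real i - 1) * (\<Prod>j=1..n-k. \<theta> + real j - 1)
                  / (\<Prod>l=1..n. 2 * \<theta> + real l - 1)"

definition F_gen :: "real \<Rightarrow> nat \<Rightarrow> (nat \<Rightarrow> real) \<Rightarrow> (nat \<Rightarrow> real)
    \<Rightarrow> (nat \<Rightarrow> nat \<Rightarrow> real) \<Rightarrow> (nat \<Rightarrow> nat \<Rightarrow> real) \<Rightarrow> (nat \<Rightarrow> nat \<Rightarrow> real) \<Rightarrow> real" where
  "F_gen \<theta> d muC muD sCC sCD sDD =
     (\<Sum>k=0..d-1. real ((d-1) choose k) * psi \<theta> (d+1) (k+1) * (muC k - muD k))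
   + (\<Sum>k=0..d-1. \<Sum>l=0..d-1. real ((d-1) choose k) * real ((d-1) choose l) *
        (- psi \<theta> (2*d+1) (k+l+2) * (sCC k l - sCD k l)
         + psi \<theta> (2*d+1) (k+l+1) * (sDD k l - sCD k l)))"

definition sd_muC :: "real \<Rightarrow> real \<Rightarrow> nat \<Rightarrow> real" where
  "sd_muC mb mc k = mb - mc / real (k+1)"
definition sd_muD :: "real \<Rightarrow> nat \<Rightarrow> real" where
  "sd_muD mb k = (if k \<noteq> 0 then mb else 0)"
definition sd_sCC :: "real \<Rightarrow> real \<Rightarrow> real \<Rightarrow> nat \<Rightarrow> nat \<Rightarrow> real" where
  "sd_sCC sb2 sc2 sbc k l = sb2 - (1 / real (k+1) + 1 / real (l+1)) * sbc
                             + sc2 / (real (k+1) * real (l+1))"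
definition sd_sDD :: "real \<Rightarrow> nat \<Rightarrow> nat \<Rightarrow> real" where
  "sd_sDD sb2 k l = (if k \<noteq> 0 \<and> l \<noteq> 0 then sb2 else 0)"
definition sd_sCD :: "real \<Rightarrow> real \<Rightarrow> nat \<Rightarrow> nat \<Rightarrow> real" where
  "sd_sCD sb2 sbc k l = (if l \<noteq> 0 then sb2 - sbc / real (k+1) else 0)"

definition F_snowdrift :: "real \<Rightarrow> real \<Rightarrow> real \<Rightarrow> real \<Rightarrow> real \<Rightarrow> real \<Rightarrow> nat \<Rightarrow> real" where
  "F_snowdrift \<theta> mb mc sb2 sc2 sbc d =
     F_gen \<theta> d (sd_muC mb mc) (sd_muD mb) (sd_sCC sb2 sc2 sbc) (sd_sCD sb2 sbc) (sd_sDD sb2)"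

end

theory Submission imports Defs "HOL-Analysis.Analysis" begin

lemma prod_poch: "(\<Prod>i=1..k. (t::real) + real i - 1) = pochhammer t k"
  by (induction k) (simp_all add: pochhammer_Suc prod.nat_ivl_Suc' algebra_simps)

lemma psi_Beta:
  assumes "\<theta> > 0" "k \<le> n"
  shows "psi \<theta> n k * Beta \<theta> \<theta> = Beta (\<theta> + real k) (\<theta> + real (n-k))"
proof -
  have nz: "\<theta> \<notin> \<int>\<^sub>\<le>\<^sub>0" "2*\<theta> \<notin> \<int>\<^sub>\<le>\<^sub>0" using assms(1)
    by (auto elim!: nonpos_Ints_cases)
  have d: "(\<Prod>l=1..n. 2 * \<theta> + real l - 1) = pochhammer (2*\<theta>) n"
    using prod_poch[of "2*\<theta>" n] by simp
  have "psi \<theta> n k = pochhammer \<theta> k * pochhammer \<theta> (n-k) / pochhammer (2*\<theta>) n"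
    unfolding psi_def prod_poch d ..
  also have "\<dots> = Gamma (\<theta>+k) / Gamma \<theta> * (Gamma (\<theta> + (n-k)) / Gamma \<theta>) / (Gamma (2*\<theta>+n) / Gamma (2*\<theta>))"
    using nz by (simp add: pochhammer_Gamma)
  finally have "psi \<theta> n k = Gamma (\<theta>+k) / Gamma \<theta> * (Gamma (\<theta> + (n-k)) / Gamma \<theta>) / (Gamma (2*\<theta>+n) / Gamma (2*\<theta>))" .
  moreover have "Gamma \<theta> \<noteq> 0" "Gamma (\<theta>*2) \<noteq> 0" "Gamma (real n + \<theta>*2) \<noteq> 0" using assms by (auto intro!: less_imp_neq[symmetric])
  ultimately show ?thesis using assms
    by (simp add: Beta_def field_simps)
qed

definition wt :: "real \<Rightarrow> real \<Rightarrow> real" where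
  "wt \<theta> x = x powr (\<theta> - 1) * (1 - x) powr (\<theta> - 1)"

lemma mono_int:
  assumes "\<theta> > 0" "k \<le> n"
  shows "((\<lambda>x. wt \<theta> x * (x^k * (1-x)^(n-k))) has_integral (psi \<theta> n k * Beta \<theta> \<theta>)) {0..1}"
proof -
  have "((\<lambda>x. x powr ((\<theta> + real k) - 1) * (1 - x) powr ((\<theta> + real (n-k)) - 1)) has_integral
        Beta (\<theta> + real k) (\<theta> + real (n-k))) {0..1}"
    using assms by (intro has_integral_Beta_real) auto
  then have "((\<lambda>x. wt \<theta> x * (x^k * (1-x)^(n-k))) has_integral Beta (\<theta> + real k) (\<theta> + real (n-k))) {0..1}"
  proof (rule has_integral_eq[rotated])
    fix x :: real assume x: "x \<in> {0..1}"
    have e: "y powr (\<theta> + real m - 1) = y powr (\<theta> - 1) * y ^ m" if "y \<ge> 0" for y :: real and m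
    proof (cases "y = 0")
      case True then show ?thesis by simp
    next
      case False
      then have "y > 0" using that by simp
      have "\<theta> + real m - 1 = (\<theta> - 1) + real m" by simp
      then show ?thesis using \<open>y > 0\<close> by (simp only: powr_add powr_realpow)
    qed
    show "x powr ((\<theta> + real k) - 1) * (1 - x) powr ((\<theta> + real (n-k)) - 1) = wt \<theta> x * (x^k * (1-x)^(n-k))"
      using x e[of x k] e[of "1-x" "n-k"] by (simp add: wt_def)
  qed
  then show ?thesis using psi_Beta[OF assms] by simp
qed

lemma mono_int':
  assumes "\<theta> > 0" "k \<le> n"
  shows "((\<lambda>x. wt \<theta> x * (c * (x^k * (1-x)^(n-k)))) has_integral (c * (psi \<theta> n k * Beta \<theta> \<theta>))) {0..1}"
  using has_integral_mult_right[OF mono_int[OF assms], of c] by (simp add: algebra_simps)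

definition gF :: "nat \<Rightarrow> (nat \<Rightarrow> real) \<Rightarrow> (nat \<Rightarrow> real)
    \<Rightarrow> (nat \<Rightarrow> nat \<Rightarrow> real) \<Rightarrow> (nat \<Rightarrow> nat \<Rightarrow> real) \<Rightarrow> (nat \<Rightarrow> nat \<Rightarrow> real) \<Rightarrow> real \<Rightarrow> real" where
  "gF d muC muD sCC sCD sDD x =
     (\<Sum>k=0..d-1. real ((d-1) choose k) * (muC k - muD k) * (x^(k+1) * (1-x)^(d+1-(k+1))))
   + (\<Sum>k=0..d-1. \<Sum>l=0..d-1.
        (- (real ((d-1) choose k) * real ((d-1) choose l) * (sCC k l - sCD k l))) * (x^(k+l+2) * (1-x)^(2*d+1-(k+l+2)))
      + (real ((d-1) choose k) * real ((d-1) choose l) * (sDD k l - sCD k l)) * (x^(k+l+1) * (1-x)^(2*d+1-(k+l+1))))"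

lemma F_int:
  assumes "\<theta> > 0" "d \<ge> 1"
  shows "((\<lambda>x. wt \<theta> x * gF d muC muD sCC sCD sDD x) has_integral (F_gen \<theta> d muC muD sCC sCD sDD * Beta \<theta> \<theta>)) {0..1}"
proof -
  let ?B = "Beta \<theta> \<theta>"
  have h1: "((\<lambda>x. \<Sum>k=0..d-1. wt \<theta> x * (real ((d-1) choose k) * (muC k - muD k) * (x^(k+1) * (1-x)^(d+1-(k+1)))))
     has_integral (\<Sum>k=0..d-1. real ((d-1) choose k) * (muC k - muD k) * (psi \<theta> (d+1) (k+1) * ?B))) {0..1}"
    by (intro has_integral_sum finite_atLeastAtMost mono_int') (use assms in auto)
  have h2: "((\<lambda>x. \<Sum>k=0..d-1. \<Sum>l=0..d-1.
        wt \<theta> x * ((- (real ((d-1) choose k) * real ((d-1) choose l) * (sCC k l - sCD k l))) * (x^(k+l+2) * (1-x)^(2*d+1-(k+l+2))))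
      + wt \<theta> x * ((real ((d-1) choose k) * real ((d-1) choose l) * (sDD k l - sCD k l)) * (x^(k+l+1) * (1-x)^(2*d+1-(k+l+1)))))
     has_integral (\<Sum>k=0..d-1. \<Sum>l=0..d-1.
        (- (real ((d-1) choose k) * real ((d-1) choose l) * (sCC k l - sCD k l))) * (psi \<theta> (2*d+1) (k+l+2) * ?B)
      + (real ((d-1) choose k) * real ((d-1) choose l) * (sDD k l - sCD k l)) * (psi \<theta> (2*d+1) (k+l+1) * ?B))) {0..1}"
    by (intro has_integral_sum has_integral_add finite_atLeastAtMost mono_int') (use assms in auto)
  have "((\<lambda>x. wt \<theta> x * gF d muC muD sCC sCD sDD x) has_integral
     (\<Sum>k=0..d-1. real ((d-1) choose k) * (muC k - muD k) * (psi \<theta> (d+1) (k+1) * ?B)) +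
     (\<Sum>k=0..d-1. \<Sum>l=0..d-1.
        (- (real ((d-1) choose k) * real ((d-1) choose l) * (sCC k l - sCD k l))) * (psi \<theta> (2*d+1) (k+l+2) * ?B)
      + (real ((d-1) choose k) * real ((d-1) choose l) * (sDD k l - sCD k l)) * (psi \<theta> (2*d+1) (k+l+1) * ?B))) {0..1}"
    by (rule has_integral_eq[OF _ has_integral_add[OF h1 h2]])
       (simp add: gF_def sum_distrib_left distrib_left right_diff_distrib)
  moreover have "F_gen \<theta> d muC muD sCC sCD sDD * ?B = (\<Sum>k=0..d-1. real ((d-1) choose k) * (muC k - muD k) * (psi \<theta> (d+1) (k+1) * ?B)) +
     (\<Sum>k=0..d-1. \<Sum>l=0..d-1.
        (- (real ((d-1) choose k) * real ((d-1) choose l) * (sCC k l - sCD k l))) * (psi \<theta> (2*d+1) (k+l+2) * ?B)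
      + (real ((d-1) choose k) * real ((d-1) choose l) * (sDD k l - sCD k l)) * (psi \<theta> (2*d+1) (k+l+1) * ?B))"
    unfolding F_gen_def distrib_right sum_distrib_right
    by (intro arg_cong2[where f="(+)"] sum.cong refl) (simp_all add: algebra_simps)
  ultimately show ?thesis by simp
qed

definition Pb :: "nat \<Rightarrow> real \<Rightarrow> nat \<Rightarrow> real" where
  "Pb n x k = real (n choose k) * x^k * (1-x)^(n-k)"
definition Ah :: "nat \<Rightarrow> real \<Rightarrow> real" where
  "Ah n x = (\<Sum>k=0..n. Pb n x k / real (k+1))"

lemma Pb0: "Pb n x 0 = (1-x)^n" by (simp add: Pb_def)

lemma S1: "(\<Sum>k=0..n. Pb n x k) = 1"
  using binomial_ring[of x "1-x" n] by (simp add: Pb_def atMost_atLeast0)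

lemma SA: "x * Ah n x * real (n+1) = 1 - (1-x)^(n+1)"
proof -
  have "x * Ah n x * real (n+1) = (\<Sum>k=0..n. real (Suc n choose Suc k) * x^(Suc k) * (1-x)^(Suc n - Suc k))"
    unfolding Ah_def sum_distrib_left sum_distrib_right
  proof (intro sum.cong refl)
    fix k assume "k \<in> {0..n}"
    have "real (Suc n) * real (n choose k) = real (Suc n choose Suc k) * real (Suc k)"
      using Suc_times_binomial_eq[of n k] by (metis of_nat_mult)
    moreover have "x * (Pb n x k / real (k + 1)) * real (n + 1) = x ^ Suc k * (1 - x) ^ (n - k) * (real (Suc n) * real (n choose k)) / real (Suc k)"
      by (simp add: Pb_def field_simps del: binomial_Suc_Suc of_nat_Suc)
    ultimately show "x * (Pb n x k / real (k + 1)) * real (n + 1) = real (Suc n choose Suc k) * x ^ Suc k * (1 - x) ^ (Suc n - Suc k)"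
      by (simp del: binomial_Suc_Suc of_nat_Suc)
  qed
  also have "\<dots> = (\<Sum>k\<le>Suc n. real (Suc n choose k) * x^k * (1-x)^(Suc n - k)) - (1-x)^(Suc n)"
    by (subst sum.atMost_Suc_shift) (simp add: atMost_atLeast0)
  also have "\<dots> = 1 - (1-x)^(n+1)"
    using binomial_ring[of x "1-x" "Suc n"] by simp
  finally show ?thesis .
qed

lemma Lsum:
  assumes "\<And>k. k \<ge> 1 \<Longrightarrow> \<phi> k = c0 + c1 / real (k+1)"
  shows "(\<Sum>k=0..n. Pb n x k * \<phi> k) = c0 * (1 - (1-x)^n) + c1 * (Ah n x - (1-x)^n) + (1-x)^n * \<phi> 0"
proof -
  have "(\<Sum>k=0..n. Pb n x k * \<phi> k) = Pb n x 0 * \<phi> 0 + (\<Sum>k=Suc 0..n. Pb n x k * \<phi> k)"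
    by (simp add: sum.atLeast_Suc_atMost)
  also have "(\<Sum>k=Suc 0..n. Pb n x k * \<phi> k) = c0 * (\<Sum>k=Suc 0..n. Pb n x k) + c1 * (\<Sum>k=Suc 0..n. Pb n x k / real (k+1))"
    by (simp add: assms sum_distrib_left sum.distrib[symmetric] algebra_simps)
  also have "(\<Sum>k=Suc 0..n. Pb n x k) = 1 - (1-x)^n"
    using S1[of n x] by (simp add: sum.atLeast_Suc_atMost Pb0)
  also have "(\<Sum>k=Suc 0..n. Pb n x k / real (k+1)) = Ah n x - (1-x)^n"
    unfolding Ah_def by (simp add: sum.atLeast_Suc_atMost Pb0)
  finally show ?thesis by (simp add: Pb0 algebra_simps)
qed

definition Gsd :: "nat \<Rightarrow> real \<Rightarrow> real \<Rightarrow> real \<Rightarrow> real \<Rightarrow> real \<Rightarrow> real \<Rightarrow> real" where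
  "Gsd n ub uc vb vc vbc x =
    (let d = real (n+1); R = 1 - (1-x)^(n+1) in
     ((vbc - uc)* (1-x)* R + ub* d* x* (1-x)^(n+1) - vc* (1-x)* R^2/d + vbc* (2* x-1)* R* (1-x)^(n+1)
      - vb* d* x* (1-x)^(n+1)* R)/d)"

lemma mon1: "k \<le> n \<Longrightarrow> (x::real)^(k+1) * (1-x)^(Suc n+1-(k+1)) = x* (1-x)* (x^k* (1-x)^(n-k))"
proof -
  assume "k \<le> n"
  then have e: "Suc n+1-(k+1) = (n-k)+1" by arith
  have p1: "x^(k+1) = x*x^k" by simp
  have p2: "(1-x)^(Suc n+1-(k+1)) = (1-x)^(n-k)*(1-x)" unfolding e using power_Suc2[of "1-x" "n-k"] by simp
  show ?thesis unfolding p1 p2 by (simp only: mult_ac)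
qed

lemma mon2: "k \<le> n \<Longrightarrow> l \<le> n \<Longrightarrow> (x::real)^(k+l+2) * (1-x)^(2* Suc n+1-(k+l+2)) = x^2* (1-x)* (x^k* (1-x)^(n-k))* (x^l* (1-x)^(n-l))"
proof -
  assume "k \<le> n" "l \<le> n"
  then have e: "2* Suc n+1-(k+l+2) = (n-k)+(n-l)+1" by arith
  show ?thesis unfolding e power_add power_one_right by (simp only: ac_simps)
qed

lemma mon3: "k \<le> n \<Longrightarrow> l \<le> n \<Longrightarrow> (x::real)^(k+l+1) * (1-x)^(2* Suc n+1-(k+l+1)) = x* (1-x)^2* (x^k* (1-x)^(n-k))* (x^l* (1-x)^(n-l))"
proof -
  assume "k \<le> n" "l \<le> n"
  then have e: "2* Suc n+1-(k+l+1) = (n-k)+(n-l)+2" by arith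
  show ?thesis unfolding e power_add power_one_right by (simp only: ac_simps)
qed

lemma snow_id:
  fixes x :: real
  shows "gF (Suc n) (sd_muC ub uc) (sd_muD ub) (sd_sCC vb vc vbc) (sd_sCD vb vbc) (sd_sDD vb) x
         = Gsd n ub uc vb vc vbc x"
proof -
  define Q where "Q = (1-x)^n"
  define A where "A = Ah n x"
  define T where "T k l = (-1)* x^2* (1-x)* (sd_sCC vb vc vbc k l - sd_sCD vb vbc k l)
                          + x* (1-x)^2* (sd_sDD vb k l - sd_sCD vb vbc k l)" for k l
  define e0 where "e0 k = x* (1-x)^2* ((if k \<noteq> 0 then vb else 0) - vb + vbc/real(k+1))" for k
  define e1 where "e1 k = x^2* (1-x)* (vbc - vc/real(k+1))" for k
  define I where "I k = e0 k * (1-Q) + e1 k * (A-Q) + Q * T k 0" for k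
  define C0 where "C0 = x^2* (1-x)* vbc* (A-Q) - Q* x^2* (1-x)* (vb - vbc)"
  define C1 where "C1 = x* (1-x)^2* vbc* (1-Q) - x^2* (1-x)* vc* (A-Q) - Q* x^2* (1-x)* (vc - vbc)"
  have first: "(\<Sum>k=0..n. real (n choose k) * (sd_muC ub uc k - sd_muD ub k) * (x^(k+1) * (1-x)^(Suc n+1-(k+1))))
       = x* (1-x)* (Q* ub - uc* A)"
  proof -
    have "(\<Sum>k=0..n. real (n choose k) * (sd_muC ub uc k - sd_muD ub k) * (x^(k+1) * (1-x)^(Suc n+1-(k+1))))
        = (\<Sum>k=0..n. Pb n x k * (x* (1-x)* (sd_muC ub uc k - sd_muD ub k)))"
    proof (intro sum.cong refl)
      fix k assume "k \<in> {0..n}"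
      then show "real (n choose k) * (sd_muC ub uc k - sd_muD ub k) * (x^(k+1) * (1-x)^(Suc n+1-(k+1))) = Pb n x k * (x * (1-x) * (sd_muC ub uc k - sd_muD ub k))"
        by (subst mon1) (auto simp add: Pb_def)
    qed
    also have "\<dots> = 0 * (1 - (1-x)^n) + (- x* (1-x)* uc) * (Ah n x - (1-x)^n) + (1-x)^n * (x* (1-x)* (sd_muC ub uc 0 - sd_muD ub 0))"
      by (rule Lsum) (simp add: sd_muC_def sd_muD_def field_simps)
    finally show ?thesis by (simp add: Q_def A_def sd_muC_def sd_muD_def algebra_simps)
  qed
  have inner: "(\<Sum>l=0..n. (- (real (n choose k) * real (n choose l) * (sd_sCC vb vc vbc k l - sd_sCD vb vbc k l))) * (x^(k+l+2) * (1-x)^(2* Suc n+1-(k+l+2)))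
      + (real (n choose k) * real (n choose l) * (sd_sDD vb k l - sd_sCD vb vbc k l)) * (x^(k+l+1) * (1-x)^(2* Suc n+1-(k+l+1))))
      = Pb n x k * I k" if "k \<le> n" for k
  proof -
    have "(\<Sum>l=0..n. (- (real (n choose k) * real (n choose l) * (sd_sCC vb vc vbc k l - sd_sCD vb vbc k l))) * (x^(k+l+2) * (1-x)^(2* Suc n+1-(k+l+2)))
      + (real (n choose k) * real (n choose l) * (sd_sDD vb k l - sd_sCD vb vbc k l)) * (x^(k+l+1) * (1-x)^(2* Suc n+1-(k+l+1))))
      = Pb n x k * (\<Sum>l=0..n. Pb n x l * T k l)"
      unfolding sum_distrib_left
    proof (intro sum.cong refl)
      fix l assume "l \<in> {0..n}"
      then show "(- (real (n choose k) * real (n choose l) * (sd_sCC vb vc vbc k l - sd_sCD vb vbc k l))) * (x^(k+l+2) * (1-x)^(2*Suc n+1-(k+l+2)))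
      + (real (n choose k) * real (n choose l) * (sd_sDD vb k l - sd_sCD vb vbc k l)) * (x^(k+l+1) * (1-x)^(2*Suc n+1-(k+l+1))) = Pb n x k * (Pb n x l * T k l)"
        using that by (subst mon2, simp, simp, subst mon3, simp, simp) (simp add: Pb_def T_def algebra_simps)
    qed
    also have "(\<Sum>l=0..n. Pb n x l * T k l) = e0 k * (1 - (1-x)^n) + e1 k * (Ah n x - (1-x)^n) + (1-x)^n * T k 0"
      by (rule Lsum) (simp add: T_def e0_def e1_def sd_sCC_def sd_sCD_def sd_sDD_def divide_inverse inverse_mult_distrib, simp add: algebra_simps)
    finally show ?thesis by (simp add: I_def Q_def A_def)
  qed
  have outer: "(\<Sum>k=0..n. Pb n x k * I k) = C0 * (1-Q) + C1 * (A-Q) + Q * I 0"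
    unfolding Q_def A_def
    by (rule Lsum) (simp add: I_def T_def e0_def e1_def C0_def C1_def Q_def A_def sd_sCC_def sd_sCD_def sd_sDD_def divide_inverse inverse_mult_distrib, simp add: algebra_simps)
  have g: "gF (Suc n) (sd_muC ub uc) (sd_muD ub) (sd_sCC vb vc vbc) (sd_sCD vb vbc) (sd_sDD vb) x
     = x* (1-x)* (Q* ub - uc* A) + (C0 * (1-Q) + C1 * (A-Q) + Q * I 0)"
    unfolding gF_def diff_Suc_1 first outer[symmetric]
    by (intro arg_cong2[where f="(+)"] refl sum.cong inner) auto
  have hA: "x * A * real (n+1) = 1 - (1-x)* Q" using SA[of x n] by (simp add: A_def Q_def)
  have hQ: "(1-x)^(n+1) = (1-x)* Q" by (simp add: Q_def)
  define dd where "dd = real (n+1)"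
  have hA: "x * A * dd = 1 - (1-x)*Q" using hA by (simp add: dd_def)
  have Gd: "Gsd n ub uc vb vc vbc x = (let R = 1 - (1-x)^(n+1) in ((vbc - uc)*(1-x)*R + ub*dd*x*(1-x)^(n+1) - vc*(1-x)*R^2/dd + vbc*(2*x-1)*R*(1-x)^(n+1) - vb*dd*x*(1-x)^(n+1)*R)/dd)"
    unfolding Gsd_def dd_def Let_def ..
  have dpos: "dd \<noteq> 0" by (simp add: dd_def)
  have s1: "Gsd n ub uc vb vc vbc x = ((vbc - uc)*(1-x)*(x*A*dd) + ub*dd*x*((1-x)*Q)
      - vc*(1-x)*(x*A*dd)^2/dd + vbc*(2*x-1)*(x*A*dd)*((1-x)*Q)
      - vb*dd*x*((1-x)*Q)*(x*A*dd))/dd"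
    unfolding Gd Let_def hQ hA ..
  also have "\<dots> = (vbc-uc)*(1-x)*x*A + ub*x*(1-x)*Q - vc*(1-x)*x^2*A^2 + vbc*(2*x-1)*x*A*(1-x)*Q - vb*x*(1-x)*Q*(x*A*dd)"
    using dpos by (simp add: field_simps power2_eq_square)
  also have "\<dots> = (vbc-uc)*(1-x)*x*A + ub*x*(1-x)*Q - vc*(1-x)*x^2*A^2 + vbc*(2*x-1)*x*A*(1-x)*Q - vb*x*(1-x)*Q*(1-(1-x)*Q)"
    unfolding hA ..
  also have "\<dots> = x*(1-x)*(Q*ub - uc*A) + (C0 * (1-Q) + C1 * (A-Q) + Q * I 0)"
    by (simp add: I_def T_def e0_def e1_def C0_def C1_def sd_sCC_def sd_sCD_def sd_sDD_def algebra_simps power2_eq_square)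
  finally have "x*(1-x)*(Q*ub - uc*A) + (C0 * (1-Q) + C1 * (A-Q) + Q * I 0) = Gsd n ub uc vb vc vbc x" ..
  then show ?thesis unfolding g .
qed

lemma wt_nonneg: "x \<in> {0..1} \<Longrightarrow> wt \<theta> x \<ge> 0"
  by (simp add: wt_def)

lemma comb5: "(a::real) = a' \<Longrightarrow> -u*Y \<le> b \<Longrightarrow> c \<le> c' \<Longrightarrow> -q * Z \<le> e \<Longrightarrow> f \<le> w*Y \<Longrightarrow> a' - (u+w)*Y - c' - q * Z \<le> a + b - c + e - f"
  by (simp add: algebra_simps)

lemma comb_eq: "(dd::real) \<noteq> 0 \<Longrightarrow> dd*((D/dd - W/dd^2)*a + (-D/dd)*b + (-K)*c + (-V/dd)*e) = (D*a - D*b) - K*(dd*c) - W*a/dd - V*e"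
  by (simp add: field_simps power2_eq_square)

lemma Gsd_lower:
  assumes x: "x \<in> {0..1}" and D: "vbc - uc > 0"
  shows "Gsd n ub uc vb vc vbc x \<ge>
     ((vbc-uc)/real (n+1) - \<bar>vc\<bar>/(real (n+1))^2) * (x^0*(1-x)^(1-0))
   + (-(vbc-uc)/real (n+1)) * (x^0*(1-x)^((n+2)-0))
   + (-(\<bar>ub\<bar>+\<bar>vb\<bar>)) * (x^1*(1-x)^((n+2)-1))
   + (-\<bar>vbc\<bar>/real (n+1)) * (x^0*(1-x)^((n+1)-0))"
proof -
  define dd where "dd = real (n+1)"
  define R where "R = 1 - (1-x)^(n+1)"
  define P where "P = (1-x)^(n+1)"
  have dd: "dd \<ge> 1" by (simp add: dd_def)
  have x0: "0 \<le> x" "x \<le> 1" using x by auto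
  have P0: "0 \<le> P" "P \<le> 1" unfolding P_def using x0 by (simp, intro power_le_one, auto)
  have R0: "0 \<le> R" "R \<le> 1" using P0 unfolding R_def P_def by auto
  have G: "Gsd n ub uc vb vc vbc x = ((vbc - uc)*(1-x)*R + ub*dd*x*P - vc*(1-x)*R^2/dd + vbc*(2*x-1)*R*P
      - vb*dd*x*P*R)/dd"
    unfolding Gsd_def Let_def dd_def R_def P_def ..
  have t1: "(vbc - uc)*(1-x)*R = (vbc-uc)*(1-x) - (vbc-uc)*(1-x)^(n+2)"
    unfolding R_def by (simp add: algebra_simps)
  have t2: "ub*dd*x*P \<ge> -\<bar>ub\<bar>*(dd*(x*P))"
  proof -
    have "\<bar>ub*dd*x*P\<bar> = \<bar>ub\<bar>*dd*(x*P)" using dd x0 P0 by (simp add: abs_mult)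
    then show ?thesis by linarith
  qed
  have t3: "vc*(1-x)*R^2/dd \<le> \<bar>vc\<bar>*(1-x)/dd"
  proof -
    have "R^2 \<le> 1" using R0 by (simp add: power_le_one)
    then have "\<bar>vc\<bar>*(1-x)*R^2 \<le> \<bar>vc\<bar>*(1-x)*1" using x0 by (intro mult_left_mono) auto
    moreover have "vc*(1-x)*R^2 \<le> \<bar>vc\<bar>*(1-x)*R^2" using x0 by (intro mult_right_mono) auto
    ultimately show ?thesis using dd by (simp add: divide_right_mono)
  qed
  have t4: "vbc*(2*x-1)*R*P \<ge> -\<bar>vbc\<bar>*P"
  proof -
    have "\<bar>(2*x-1)*R\<bar> \<le> 1" using x0 R0 by (auto simp: abs_mult intro: mult_le_one)
    then have "\<bar>vbc\<bar>*\<bar>(2*x-1)*R\<bar>*P \<le> \<bar>vbc\<bar>*1*P" using P0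
      by (intro mult_right_mono mult_left_mono) auto
    then have "\<bar>vbc*((2*x-1)*R)*P\<bar> \<le> \<bar>vbc\<bar>*1*P" using P0 by (simp add: abs_mult)
    then show ?thesis by (simp add: mult.assoc)
  qed
  have t5: "vb*dd*x*P*R \<le> \<bar>vb\<bar>*(dd*(x*P))"
  proof -
    have "\<bar>vb*dd*x*P*R\<bar> = \<bar>vb\<bar>*dd*(x*P)*R" using dd x0 P0 R0 by (simp add: abs_mult)
    also have "\<dots> \<le> \<bar>vb\<bar>*dd*(x*P)*1" using R0 dd x0 P0 by (intro mult_left_mono) auto
    finally show ?thesis by linarith
  qed
  have "dd * Gsd n ub uc vb vc vbc x = (vbc - uc)*(1-x)*R + ub*dd*x*P - vc*(1-x)*R^2/dd + vbc*(2*x-1)*R*P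
      - vb*dd*x*P*R" unfolding G using dd by simp
  also have "\<dots> \<ge> ((vbc-uc)*(1-x) - (vbc-uc)*(1-x)^(n+2)) - (\<bar>ub\<bar>+\<bar>vb\<bar>)*(dd*(x*P)) - \<bar>vc\<bar>*(1-x)/dd - \<bar>vbc\<bar>*P"
    using comb5[OF t1 t2 t3 t4 t5] by (simp only: mult.assoc)
  finally have L: "dd * Gsd n ub uc vb vc vbc x \<ge> ((vbc-uc)*(1-x) - (vbc-uc)*(1-x)^(n+2)) - (\<bar>ub\<bar>+\<bar>vb\<bar>)*(dd*(x*P)) - \<bar>vc\<bar>*(1-x)/dd - \<bar>vbc\<bar>*P" .
  have m: "x^0*(1-x)^(1-0) = 1-x" "x^0*(1-x)^((n+2)-0) = (1-x)^(n+2)" "x^1*(1-x)^((n+2)-1) = x*P"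
      "x^0*(1-x)^((n+1)-0) = P" by (simp_all add: P_def)
  have E: "dd * (((vbc-uc)/dd - \<bar>vc\<bar>/dd^2) * (1-x) + (-(vbc-uc)/dd) * (1-x)^(n+2)
     + (-(\<bar>ub\<bar>+\<bar>vb\<bar>)) * (x*P) + (-\<bar>vbc\<bar>/dd) * P)
     = ((vbc-uc)*(1-x) - (vbc-uc)*(1-x)^(n+2)) - (\<bar>ub\<bar>+\<bar>vb\<bar>)*(dd*(x*P)) - \<bar>vc\<bar>*(1-x)/dd - \<bar>vbc\<bar>*P"
    using comb_eq[of dd "vbc-uc" "\<bar>vc\<bar>" "1-x" "(1-x)^(n+2)" "\<bar>ub\<bar>+\<bar>vb\<bar>" "x*P" "\<bar>vbc\<bar>" P] dd by simp
  have "dd * (((vbc-uc)/dd - \<bar>vc\<bar>/dd^2) * (1-x) + (-(vbc-uc)/dd) * (1-x)^(n+2)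
     + (-(\<bar>ub\<bar>+\<bar>vb\<bar>)) * (x*P) + (-\<bar>vbc\<bar>/dd) * P) \<le> dd * Gsd n ub uc vb vc vbc x"
    unfolding E by (rule L)
  then have "((vbc-uc)/dd - \<bar>vc\<bar>/dd^2) * (1-x) + (-(vbc-uc)/dd) * (1-x)^(n+2)
     + (-(\<bar>ub\<bar>+\<bar>vb\<bar>)) * (x*P) + (-\<bar>vbc\<bar>/dd) * P \<le> Gsd n ub uc vb vc vbc x"
    by (rule mult_left_le_imp_le) (use dd in linarith)
  then show ?thesis unfolding m dd_def .
qed

lemma Beta_pos: "\<theta> > 0 \<Longrightarrow> Beta \<theta> \<theta> > (0::real)"
  by (simp add: Beta_def)

lemma F_lower:
  assumes th: "\<theta> > 0" and D: "vbc - uc > 0"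
  shows "F_snowdrift \<theta> ub uc vb vc vbc (Suc n) \<ge>
     ((vbc-uc)/real (n+1) - \<bar>vc\<bar>/(real (n+1))^2) * psi \<theta> 1 0
   + (-(vbc-uc)/real (n+1)) * psi \<theta> (n+2) 0
   + (-(\<bar>ub\<bar>+\<bar>vb\<bar>)) * psi \<theta> (n+2) 1
   + (-\<bar>vbc\<bar>/real (n+1)) * psi \<theta> (n+1) 0"
proof -
  let ?B = "Beta \<theta> \<theta>"
  define c1 where "c1 = (vbc-uc)/real (n+1) - \<bar>vc\<bar>/(real (n+1))^2"
  define c2 where "c2 = -(vbc-uc)/real (n+1)"
  define c3 where "c3 = -(\<bar>ub\<bar>+\<bar>vb\<bar>)"
  define c4 where "c4 = -\<bar>vbc\<bar>/real (n+1)"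
  have h1: "((\<lambda>x. wt \<theta> x * gF (Suc n) (sd_muC ub uc) (sd_muD ub) (sd_sCC vb vc vbc) (sd_sCD vb vbc) (sd_sDD vb) x)
      has_integral (F_snowdrift \<theta> ub uc vb vc vbc (Suc n) * ?B)) {0..1}"
    unfolding F_snowdrift_def by (rule F_int) (use th in auto)
  have h2: "((\<lambda>x. wt \<theta> x * (c1 * (x^0*(1-x)^(1-0))) + wt \<theta> x * (c2 * (x^0*(1-x)^((n+2)-0)))
       + wt \<theta> x * (c3 * (x^1*(1-x)^((n+2)-1))) + wt \<theta> x * (c4 * (x^0*(1-x)^((n+1)-0))))
      has_integral (c1 * (psi \<theta> 1 0 * ?B) + c2 * (psi \<theta> (n+2) 0 * ?B) + c3 * (psi \<theta> (n+2) 1 * ?B) + c4 * (psi \<theta> (n+1) 0 * ?B))) {0..1}"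
    by (intro has_integral_add mono_int') (use th in auto)
  have "c1 * (psi \<theta> 1 0 * ?B) + c2 * (psi \<theta> (n+2) 0 * ?B) + c3 * (psi \<theta> (n+2) 1 * ?B) + c4 * (psi \<theta> (n+1) 0 * ?B)
      \<le> F_snowdrift \<theta> ub uc vb vc vbc (Suc n) * ?B"
  proof (rule has_integral_le[OF h2 h1])
    fix x :: real assume x: "x \<in> {0..1}"
    have "wt \<theta> x * (c1 * (x^0*(1-x)^(1-0)) + c2 * (x^0*(1-x)^((n+2)-0)) + c3 * (x^1*(1-x)^((n+2)-1)) + c4 * (x^0*(1-x)^((n+1)-0)))
       \<le> wt \<theta> x * Gsd n ub uc vb vc vbc x"
      using Gsd_lower[OF x D, where n=n and ub=ub and vb=vb and vc=vc] wt_nonneg[OF x, of \<theta>]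
      unfolding c1_def c2_def c3_def c4_def by (intro mult_left_mono) auto
    then show "wt \<theta> x * (c1 * (x^0*(1-x)^(1-0))) + wt \<theta> x * (c2 * (x^0*(1-x)^((n+2)-0)))
       + wt \<theta> x * (c3 * (x^1*(1-x)^((n+2)-1))) + wt \<theta> x * (c4 * (x^0*(1-x)^((n+1)-0)))
      \<le> wt \<theta> x * gF (Suc n) (sd_muC ub uc) (sd_muD ub) (sd_sCC vb vc vbc) (sd_sCD vb vbc) (sd_sDD vb) x"
      unfolding snow_id by (simp only: distrib_left)
  qed
  then have "(c1 * psi \<theta> 1 0 + c2 * psi \<theta> (n+2) 0 + c3 * psi \<theta> (n+2) 1 + c4 * psi \<theta> (n+1) 0) * ?B
      \<le> F_snowdrift \<theta> ub uc vb vc vbc (Suc n) * ?B"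
    by (simp add: algebra_simps)
  then show ?thesis using Beta_pos[OF th] unfolding c1_def c2_def c3_def c4_def
    by (simp only: mult_le_cancel_right_pos)
qed

lemma psi_poch: "psi \<theta> n k = pochhammer \<theta> k * pochhammer \<theta> (n-k) / pochhammer (2*\<theta>) n"
proof -
  have d: "(\<Prod>l=1..n. 2 * \<theta> + real l - 1) = pochhammer (2*\<theta>) n"
    using prod_poch[of "2*\<theta>" n] by simp
  show ?thesis unfolding psi_def prod_poch d ..
qed

lemma ps1: "\<theta> > 0 \<Longrightarrow> psi \<theta> 1 0 = 1/2"
  by (simp add: psi_poch)

lemma ps_pos: "\<theta> > 0 \<Longrightarrow> psi \<theta> m 0 > 0"
  by (simp add: psi_poch pochhammer_pos)

lemma ps2: "\<theta> > 0 \<Longrightarrow> psi \<theta> (m+1) 0 = psi \<theta> m 0 * ((\<theta> + real m)/(2*\<theta> + real m))"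
  by (simp add: psi_poch pochhammer_Suc)

lemma ps3: "\<theta> > 0 \<Longrightarrow> psi \<theta> (m+1) 1 = psi \<theta> m 0 * (\<theta>/(2*\<theta> + real m))"
  by (simp add: psi_poch pochhammer_Suc)

lemma p_bound:
  assumes th: "\<theta> > 0"
  shows "psi \<theta> m 0 \<le> 1 / (1 + \<theta>/(2*\<theta>+1) * harm m)"
proof (induction m)
  case 0
  then show ?case by (simp add: psi_poch harm_def)
next
  case (Suc m)
  define c where "c = \<theta>/(2*\<theta>+1)"
  define S where "S = c * harm m"
  define b where "b = c / real (m+1)"
  define p where "p = psi \<theta> m 0"
  have c0: "c > 0" "c < 1" unfolding c_def using th by auto
  have S0: "S \<ge> 0" unfolding S_def using c0 by (simp add: harm_nonneg)
  have b0: "b \<ge> 0" "b \<le> 1" unfolding b_def using c0 by (auto simp: field_simps)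
  have p0: "p > 0" unfolding p_def using ps_pos[OF th] .
  have IH: "p \<le> 1/(1+S)" using Suc.IH unfolding p_def S_def c_def .
  have ab: "(\<theta> + real m)/(2*\<theta> + real m) \<le> 1 - b"
  proof -
    have "b \<le> \<theta>/(2*\<theta> + real m)"
    proof -
      have "b = \<theta>/((2*\<theta>+1)*real (m+1))" unfolding b_def c_def by simp
      also have "\<dots> \<le> \<theta>/(2*\<theta> + real m)"
      proof (rule divide_left_mono)
        show "2*\<theta> + real m \<le> (2*\<theta>+1)*real (m+1)" using th by (simp add: algebra_simps)
        show "0 \<le> \<theta>" using th by simp
        show "0 < (2*\<theta>+1)*real (m+1) * (2*\<theta> + real m)" using th by (intro mult_pos_pos) auto
      qed
      finally show ?thesis .
    qed
    moreover have "(\<theta> + real m)/(2*\<theta> + real m) = 1 - \<theta>/(2*\<theta> + real m)"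
      using th by (simp add: field_simps)
    ultimately show ?thesis by linarith
  qed
  have "psi \<theta> (Suc m) 0 = p * ((\<theta> + real m)/(2*\<theta> + real m))"
    using ps2[OF th, of m] by (simp add: p_def)
  also have "\<dots> \<le> 1/(1+S) * (1 - b)"
    using IH ab p0 th S0 by (intro mult_mono) auto
  also have "\<dots> \<le> 1/(1+S+b)"
  proof -
    have "(1-b)*(1+S+b) \<le> 1+S" using S0 b0 by (simp add: algebra_simps mult_nonneg_nonneg)
    then show ?thesis using S0 b0 by (simp add: field_simps)
  qed
  also have "1+S+b = 1 + c * harm (Suc m)"
    unfolding S_def b_def by (simp add: harm_Suc divide_inverse distrib_left)
  finally show ?case unfolding c_def .
qed

lemma final_ineq:
  fixes F dd p pa pb D K V W th :: real
  assumes dd: "dd > 0" and p: "p \<ge> 0" and D: "D > 0" and K: "K \<ge> 0" and V: "V \<ge> 0" and th: "th > 0"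
    and pa: "pa \<le> p" and pb: "pb \<le> th*p/dd"
    and pe: "p < D/(4*(D+K*th+V+1))" and We: "W/(2*dd) < D/4"
    and F: "F \<ge> (D/dd - W/dd^2)*(1/2) + (-D/dd)*pa + (-K)*pb + (-V/dd)*p"
  shows "F > 0"
proof -
  have "D*pa/dd \<le> D*p/dd" using pa D dd by (intro divide_right_mono mult_left_mono) auto
  then have a1: "(-D/dd)*pa \<ge> (-D/dd)*p" by simp
  have a2: "(-K)*pb \<ge> (-K)*(th*p/dd)" using mult_left_mono[OF pb K] by simp
  have e: "(D/dd - W/dd^2)*(1/2) + (-D/dd)*p + (-K)*(th*p/dd) + (-V/dd)*p
      = (D/2 - W/(2*dd) - (D+K*th+V)*p)/dd" using dd by (simp add: field_simps power2_eq_square)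
  define M where "M = D+K*th+V+1"
  have M0: "M > 0" unfolding M_def using D K V th by (simp add: add_pos_nonneg)
  have "(D+K*th+V)*p \<le> M*p" unfolding M_def using p by (simp add: algebra_simps)
  also have "\<dots> < M * (D/(4*M))" by (rule mult_strict_left_mono[OF pe[folded M_def] M0])
  also have "\<dots> = D/4" using M0 by simp
  finally have "(D+K*th+V)*p < D/4" .
  then have "D/2 - W/(2*dd) - (D+K*th+V)*p > 0" using We by linarith
  then have "(D/2 - W/(2*dd) - (D+K*th+V)*p)/dd > 0" using dd by simp
  then show ?thesis using F a1 a2 e by linarith
qed

lemma key:
  assumes th: "\<theta> > 0" and D: "vbc - uc > 0"
    and pe: "psi \<theta> (Suc n) 0 < (vbc-uc)/(4*((vbc-uc)+(\<bar>ub\<bar>+\<bar>vb\<bar>)*\<theta>+\<bar>vbc\<bar>+1))"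
    and We: "\<bar>vc\<bar>/(2*real (Suc n)) < (vbc-uc)/4"
  shows "F_snowdrift \<theta> ub uc vb vc vbc (Suc n) > 0"
proof -
  define p where "p = psi \<theta> (n+1) 0"
  have p0: "p \<ge> 0" unfolding p_def using ps_pos[OF th] less_imp_le by blast
  have pa: "psi \<theta> (n+2) 0 \<le> p"
  proof -
    have "psi \<theta> (n+2) 0 = p * ((\<theta> + real (n+1))/(2*\<theta> + real (n+1)))"
      using ps2[OF th, of "n+1"] by (simp add: p_def)
    also have "\<dots> \<le> p * 1" using p0 th by (intro mult_left_mono) auto
    finally show ?thesis by simp
  qed
  have pb: "psi \<theta> (n+2) 1 \<le> \<theta>*p/real (n+1)"
  proof -
    have "psi \<theta> (n+2) 1 = p * (\<theta>/(2*\<theta> + real (n+1)))"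
      using ps3[OF th, of "n+1"] by (simp add: p_def)
    also have "\<dots> \<le> p * (\<theta>/real (n+1))" using p0 th
      by (intro mult_left_mono divide_left_mono) auto
    finally show ?thesis by (simp add: mult.commute)
  qed
  have FL: "F_snowdrift \<theta> ub uc vb vc vbc (Suc n) \<ge> ((vbc-uc)/real (n+1) - \<bar>vc\<bar>/(real (n+1))^2) * (1/2)
   + (-(vbc-uc)/real (n+1)) * psi \<theta> (n+2) 0
   + (-(\<bar>ub\<bar>+\<bar>vb\<bar>)) * psi \<theta> (n+2) 1
   + (-\<bar>vbc\<bar>/real (n+1)) * p"
    using F_lower[OF th D, where ub=ub and vb=vb and vc=vc and n=n] unfolding ps1[OF th] p_def .
  have dd0: "real (n+1) > 0" by simp
  have K0: "\<bar>ub\<bar>+\<bar>vb\<bar> \<ge> 0" by simp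
  have V0: "\<bar>vbc\<bar> \<ge> 0" by simp
  have pe': "p < (vbc-uc)/(4*((vbc-uc)+(\<bar>ub\<bar>+\<bar>vb\<bar>)*\<theta>+\<bar>vbc\<bar>+1))" using pe unfolding p_def by simp
  have We': "\<bar>vc\<bar>/(2*real (n+1)) < (vbc-uc)/4" using We by simp
  show ?thesis by (rule final_ineq[OF dd0 p0 D K0 V0 th pa pb pe' We' FL])
qed

theorem mainTheorem7:
  fixes \<theta> mu_b mu_c sigma_b2 sigma_c2 sigma_bc :: real
  assumes "\<theta> > 0" and "sigma_bc > mu_c"
  shows "\<exists>d0\<ge>2. \<forall>d\<ge>d0. F_snowdrift \<theta> mu_b mu_c sigma_b2 sigma_c2 sigma_bc d > 0"
proof -
  note th = assms(1)
  have D: "sigma_bc - mu_c > 0" using assms(2) by simp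
  define eps where "eps = (sigma_bc-mu_c)/(4*((sigma_bc-mu_c)+(\<bar>mu_b\<bar>+\<bar>sigma_b2\<bar>)*\<theta>+\<bar>sigma_bc\<bar>+1))"
  define c where "c = \<theta>/(2*\<theta>+1)"
  have eps0: "eps > 0" unfolding eps_def using D th by (intro divide_pos_pos mult_pos_pos add_pos_nonneg) auto
  have c0: "c > 0" unfolding c_def using th by simp
  have ev1: "eventually (\<lambda>m. psi \<theta> m 0 < eps) sequentially"
  proof -
    have "eventually (\<lambda>m. 1/(c*eps) \<le> harm m) sequentially"
      using harm_at_top unfolding filterlim_at_top by blast
    then show ?thesis
    proof (rule eventually_mono)
      fix m assume h: "1/(c*eps) \<le> (harm m :: real)"
      have "1/eps \<le> c * harm m" using h c0 eps0 by (simp add: field_simps)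
      then have "1/eps < 1 + c * harm m" by linarith
      moreover have X: "1 + c*harm m > 0" using c0 harm_nonneg[where 'a=real] by (simp add: add_pos_nonneg)
      ultimately have "1 < eps * (1 + c*harm m)" using eps0 by (simp add: divide_less_eq mult.commute)
      then have "1/(1 + c*harm m) < eps" using X by (simp add: divide_less_eq)
      then show "psi \<theta> m 0 < eps" using p_bound[OF th, of m] unfolding c_def by linarith
    qed
  qed
  have ev2: "eventually (\<lambda>m. \<bar>sigma_c2\<bar>/(2*real m) < (sigma_bc-mu_c)/4) sequentially"
  proof -
    have "(\<lambda>m. (\<bar>sigma_c2\<bar>/2) / real m) \<longlonglongrightarrow> 0" by (rule lim_const_over_n)
    then have "eventually (\<lambda>m. (\<bar>sigma_c2\<bar>/2) / real m < (sigma_bc-mu_c)/4) sequentially"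
      using D by (intro order_tendstoD(2)) auto
    then show ?thesis by simp
  qed
  obtain N where N: "\<And>m. m \<ge> N \<Longrightarrow> psi \<theta> m 0 < eps \<and> \<bar>sigma_c2\<bar>/(2*real m) < (sigma_bc-mu_c)/4"
    using eventually_conj[OF ev1 ev2] unfolding eventually_sequentially by blast
  show ?thesis
  proof (intro exI[of _ "max 2 N"] conjI allI impI)
    fix d :: nat assume d: "max 2 N \<le> d"
    then obtain n where n: "d = Suc n" by (cases d) auto
    have "psi \<theta> (Suc n) 0 < eps" "\<bar>sigma_c2\<bar>/(2*real (Suc n)) < (sigma_bc-mu_c)/4"
      using N[of d] d n by auto
    then show "F_snowdrift \<theta> mu_b mu_c sigma_b2 sigma_c2 sigma_bc d > 0"
      unfolding n using key[OF th D] unfolding eps_def by blast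
  qed simp
qed

end
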